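(* Let $G=\operatorname{Gp}\langle X\mid R\rangle$ and let $\Re$ be a complete rewriting system for $G$ on $X\cup X^{-1}$ satisfying the condition $C^{+}$. Then for all positive words $u,v\in X^{*}$: $u\equiv_{\Re}v$ if and only if $u\equiv_{\Re^{+}}v$.
   Context: A rewriting system on an alphabet $\Sigma$ is a set of rules $l\rightarrow r$ in $\Sigma^{*}\times\Sigma^{*}$; $ulv$ reduces to $urv$. Complete means terminating (no infinite reduction chains) and confluent (words with a common ancestor have a common descendant). $\equiv_{\Re}$ is the congruence generated by $\Re$. A rewriting system for $G$ is one on $X\cup X^{-1}$ whose congruence equals the congruence generated by $R\cup\{xx^{-1}=1,x^{-1}x=1:x\in X\}$. A word is positive if it lies in $X^{*}$ (the empty word counts as positive). $\Re^{+}$ is the set of rules of $\Re$ with positive left-hand side. $\Re$ satisfies $C^{+}$ if $\Re^{+}\neq\emptyset$ and every rule of $\Re$ with positive left-hand side has positive right-hand side. *)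

theory Defs
  imports Main
begin

text \<open>Letters of the alphabet X \<union> X^-1: Pos x stands for x, Neg x for x^-1.\<close>
datatype 'a letter = Pos 'a | Neg 'a

type_synonym 'a word = "'a letter list"
type_synonym 'a rules = "('a word \<times> 'a word) set"

definition alph :: "'a set \<Rightarrow> 'a letter set" where
  "alph X = Pos ` X \<union> Neg ` X"

definition rewriting_system_on :: "'a set \<Rightarrow> 'a rules \<Rightarrow> bool" where
  "rewriting_system_on X Re \<longleftrightarrow> (\<forall>(l, r) \<in> Re. l \<in> lists (alph X) \<and> r \<in> lists (alph X))"

definition rstep :: "'a rules \<Rightarrow> ('a word \<times> 'a word) set" where
  "rstep Re = {(u @ l @ v, u @ r @ v) | u l r v. (l, r) \<in> Re}"

definition cong_gen :: "'a rules \<Rightarrow> ('a word \<times> 'a word) set" where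
  "cong_gen Re = (rstep Re \<union> (rstep Re)\<inverse>)\<^sup>*"

definition terminating :: "'a rules \<Rightarrow> bool" where
  "terminating Re \<longleftrightarrow> \<not> (\<exists>f :: nat \<Rightarrow> 'a word. \<forall>i. (f i, f (Suc i)) \<in> rstep Re)"

definition confluent :: "'a rules \<Rightarrow> bool" where
  "confluent Re \<longleftrightarrow> (\<forall>w x y. (w, x) \<in> (rstep Re)\<^sup>* \<and> (w, y) \<in> (rstep Re)\<^sup>*
      \<longrightarrow> (\<exists>z. (x, z) \<in> (rstep Re)\<^sup>* \<and> (y, z) \<in> (rstep Re)\<^sup>*))"

definition complete :: "'a rules \<Rightarrow> bool" where
  "complete Re \<longleftrightarrow> terminating Re \<and> confluent Re"

definition free_rels :: "'a set \<Rightarrow> 'a rules" where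
  "free_rels X = {([Pos x, Neg x], []) | x. x \<in> X} \<union> {([Neg x, Pos x], []) | x. x \<in> X}"

definition rewriting_system_for :: "'a set \<Rightarrow> 'a rules \<Rightarrow> 'a rules \<Rightarrow> bool" where
  "rewriting_system_for X R Re \<longleftrightarrow>
     rewriting_system_on X Re \<and> cong_gen Re = cong_gen (R \<union> free_rels X)"

definition positive :: "'a set \<Rightarrow> 'a word \<Rightarrow> bool" where
  "positive X w \<longleftrightarrow> w \<in> lists (Pos ` X)"

definition pos_rules :: "'a set \<Rightarrow> 'a rules \<Rightarrow> 'a rules" where
  "pos_rules X Re = {(l, r) \<in> Re. positive X l}"

definition cond_Cplus :: "'a set \<Rightarrow> 'a rules \<Rightarrow> bool" where
  "cond_Cplus X Re \<longleftrightarrow> pos_rules X Re \<noteq> {} \<and> (\<forall>(l, r) \<in> Re. positive X l \<longrightarrow> positive X r)"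

end

theory Submission
  imports Defs
begin

lemma CR_aux:
  assumes c: "confluent Re"
    and "(u, v) \<in> (rstep Re \<union> (rstep Re)\<inverse>)\<^sup>*"
  shows "\<exists>z. (u, z) \<in> (rstep Re)\<^sup>* \<and> (v, z) \<in> (rstep Re)\<^sup>*"
  using assms(2)
proof (induction rule: rtrancl_induct)
  case base then show ?case by blast
next
  case (step w w')
  then obtain a where a: "(u, a) \<in> (rstep Re)\<^sup>*" "(w, a) \<in> (rstep Re)\<^sup>*" by blast
  show ?case
  proof (cases "(w, w') \<in> rstep Re")
    case True
    then have "(w, w') \<in> (rstep Re)\<^sup>*" by blast
    with a c obtain b where "(a, b) \<in> (rstep Re)\<^sup>*" "(w', b) \<in> (rstep Re)\<^sup>*"
      unfolding confluent_def by blast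
    with a show ?thesis by (meson rtrancl_trans)
  next
    case False
    with step have "(w', w) \<in> rstep Re" by blast
    with a show ?thesis by (meson converse_rtrancl_into_rtrancl)
  qed
qed

lemma pos_sub: "positive X (p @ l @ q) \<Longrightarrow> positive X l \<and> positive X p \<and> positive X q"
  unfolding positive_def by auto

lemma step_pos:
  assumes "cond_Cplus X Re" "positive X w" "(w, w') \<in> rstep Re"
  shows "(w, w') \<in> rstep (pos_rules X Re) \<and> positive X w'"
proof -
  from assms(3) obtain p l r q where w: "w = p @ l @ q" "w' = p @ r @ q" "(l, r) \<in> Re"
    unfolding rstep_def by blast
  with assms(2) have "positive X l" "positive X p" "positive X q" using pos_sub by blast+
  moreover with assms(1) w have "positive X r" unfolding cond_Cplus_def by blast
  ultimately have "(l, r) \<in> pos_rules X Re" using w unfolding pos_rules_def by blast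
  then have "(w, w') \<in> rstep (pos_rules X Re)" using w unfolding rstep_def by blast
  moreover have "positive X w'" using w \<open>positive X r\<close> \<open>positive X p\<close> \<open>positive X q\<close>
    unfolding positive_def by auto
  ultimately show ?thesis by blast
qed

lemma nf_exists:
  assumes t: "terminating Re" and c: "cond_Cplus X Re"
  shows "positive X w \<Longrightarrow> \<exists>z. (w, z) \<in> (rstep (pos_rules X Re))\<^sup>* \<and> (w, z) \<in> (rstep Re)\<^sup>*
            \<and> (\<forall>y. (z, y) \<notin> rstep Re)"
proof -
  have wf: "wf ((rstep Re)\<inverse>)"
    using t unfolding terminating_def wf_iff_no_infinite_down_chain by simp
  show "positive X w \<Longrightarrow> ?thesis"
  proof (induction w rule: wf_induct_rule[OF wf])
    case (1 w)
    show ?case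
    proof (cases "\<exists>y. (w, y) \<in> rstep Re")
      case True
      then obtain y where y: "(w, y) \<in> rstep Re" by blast
      with step_pos[OF c "1.prems" y] have "(w, y) \<in> rstep (pos_rules X Re)" "positive X y" by auto
      with 1 y obtain z where "(y, z) \<in> (rstep (pos_rules X Re))\<^sup>*" "(y, z) \<in> (rstep Re)\<^sup>*"
        "\<forall>y. (z, y) \<notin> rstep Re" by blast
      then show ?thesis using y \<open>(w, y) \<in> rstep (pos_rules X Re)\<close>
        by (meson converse_rtrancl_into_rtrancl)
    next
      case False then show ?thesis by blast
    qed
  qed
qed

lemma nf_stuck: "(z, y) \<in> (rstep Re)\<^sup>* \<Longrightarrow> \<forall>y. (z, y) \<notin> rstep Re \<Longrightarrow> y = z"
  by (erule converse_rtranclE) auto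

lemma cong_mono: "A \<subseteq> B \<Longrightarrow> cong_gen A \<subseteq> cong_gen B"
proof -
  assume "A \<subseteq> B"
  then have "rstep A \<subseteq> rstep B" unfolding rstep_def by blast
  then show ?thesis unfolding cong_gen_def by (intro rtrancl_mono) blast
qed

theorem lemma3p7:
  fixes X :: "'a set" and R Re :: "'a rules"
  assumes "\<forall>(l, r) \<in> R. l \<in> lists (alph X) \<and> r \<in> lists (alph X)"
    and "rewriting_system_for X R Re"
    and "complete Re"
    and "cond_Cplus X Re"
    and "positive X u" and "positive X v"
  shows "(u, v) \<in> cong_gen Re \<longleftrightarrow> (u, v) \<in> cong_gen (pos_rules X Re)"
proof
  assume "(u, v) \<in> cong_gen (pos_rules X Re)"
  moreover have "pos_rules X Re \<subseteq> Re" unfolding pos_rules_def by blast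
  ultimately show "(u, v) \<in> cong_gen Re" using cong_mono by blast
next
  assume uv: "(u, v) \<in> cong_gen Re"
  have t: "terminating Re" and c: "confluent Re" using assms(3) unfolding complete_def by auto
  obtain a where a: "(u, a) \<in> (rstep (pos_rules X Re))\<^sup>*" "(u, a) \<in> (rstep Re)\<^sup>*"
    "\<forall>y. (a, y) \<notin> rstep Re" using nf_exists[OF t assms(4) assms(5)] by blast
  obtain b where b: "(v, b) \<in> (rstep (pos_rules X Re))\<^sup>*" "(v, b) \<in> (rstep Re)\<^sup>*"
    "\<forall>y. (b, y) \<notin> rstep Re" using nf_exists[OF t assms(4) assms(6)] by blast
  obtain z where z: "(u, z) \<in> (rstep Re)\<^sup>*" "(v, z) \<in> (rstep Re)\<^sup>*"
    using CR_aux[OF c] uv unfolding cong_gen_def by blast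
  obtain z1 where "(a, z1) \<in> (rstep Re)\<^sup>*" "(z, z1) \<in> (rstep Re)\<^sup>*"
    using c a(2) z(1) unfolding confluent_def by blast
  then have az: "(z, a) \<in> (rstep Re)\<^sup>*" using nf_stuck a(3) by metis
  obtain z2 where "(b, z2) \<in> (rstep Re)\<^sup>*" "(z, z2) \<in> (rstep Re)\<^sup>*"
    using c b(2) z(2) unfolding confluent_def by blast
  then have bz: "(z, b) \<in> (rstep Re)\<^sup>*" using nf_stuck b(3) by metis
  obtain z3 where "(a, z3) \<in> (rstep Re)\<^sup>*" "(b, z3) \<in> (rstep Re)\<^sup>*"
    using c az bz unfolding confluent_def by blast
  then have ab: "a = b" using nf_stuck a(3) b(3) by metis
  let ?S = "rstep (pos_rules X Re)"
  have "(u, a) \<in> (?S \<union> ?S\<inverse>)\<^sup>*" using a(1) by (rule rtrancl_mono[THEN subsetD, rotated]) blast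
  moreover have "(a, v) \<in> (?S \<union> ?S\<inverse>)\<^sup>*"
  proof -
    have "(v, a) \<in> (?S \<union> ?S\<inverse>)\<^sup>*" using b(1) ab by (metis rtrancl_mono[THEN subsetD] Un_upper1)
    then show ?thesis by (metis converse_Un converse_converse rtrancl_converseI sup_commute)
  qed
  ultimately show "(u, v) \<in> cong_gen (pos_rules X Re)" unfolding cong_gen_def by simp
qed

end
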